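(* Fix a deterministic adversary $A$, parameters $\varepsilon,\delta,t,k$, a database $S$ and an element $x'\in X$, and let $S'=S\cup\{x'\}$. For a database $T$ let $\mathcal B(T)\in\{\bot,\top\}^*$ be the answer vector of \texttt{ThresholdMonitor} on $T$ interacting with $A$. Let $\vec a=(a_1,a_2,\dots)$ be an outcome vector and $W=(w_1,w_2,\dots)$ a vector of values of the noises $w_i$ such that event $E_3$ (defined in the context, for the execution on $S$) occurs for $(\vec a,W)$. Let $i^*$ be the first time step at which $c_{i^*}(x')\geq k$ (counters computed along $\vec a$), let $I_{\rm top}$ be the set of time steps $i\leq i^*$ with $a_i=\top$, and let $W'$ be the vector with $w'_i=w_i-f_{\vec a,i}(x')$ for $i\in I_{\rm top}$ and $w'_i=w_i$ otherwise. Then $$\Pr[\mathcal B(S')=\vec a\mid W']\leq\Pr[\mathcal B(S)=\vec a\mid W]\leq\exp\left(\frac{75(k+1)\varepsilon}{\log\frac1\delta}+25\varepsilon\right)\Pr[\mathcal B(S')=\vec a\mid W],$$ where conditioning on $W$ (resp. $W'$) means fixing the noises $w_i$ to those values, so that probabilities are only over the noises $v_i$.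
   Context: $X$ is a data domain; databases are finite multisets of elements of $X$. For $f:X\to[0,1]$, $f(D)=\sum_{x\in D}f(x)$. $\mathrm{Lap}(b)$ has density $\frac{1}{2b}e^{-|x|/b}$. Algorithm \texttt{ThresholdMonitor}. Input: database $S$, parameters $\varepsilon,\delta,t,k$, adaptively chosen queries $f_i:X\to[0,1]$. Initialize $c(x)=0$ for all $x\in X$. Let $\Delta=\frac{1}{\varepsilon}\log\left(\frac{1}{\delta}\right)\log\left(\frac{1}{\varepsilon}\log\frac{1}{\delta}\right)$. In round $i$: sample independently $w_i\sim\mathrm{Lap}(10\Delta)$, $v_i\sim\mathrm{Lap}(\frac{1}{\varepsilon}\log\frac{1}{\delta})$; let $\overline{v}_i=\min\{v_i,\Delta\}$, $\hat f_i=f_i(S)+w_i+\overline{v}_i$ (current $S$). If $\hat f_i<t$ output $a_i=\bot$; else output $a_i=\top$, set $c(x)\leftarrow c(x)+f_i(x)$ for all $x\in X$, and delete from $S$ every $x$ with $c(x)\geq k$. Since $A$ is deterministic, the $i$th query is determined by the previous answers; $f_{\vec a,i}$ denotes the query $A$ chooses after seeing the first $i-1$ answers of $\vec a$. In the execution on $S$, $S_i$ is the database before the $i$th query and $c_i(\cdot)$ the counter after round $i$. Time step $i$ is an almost-top if $a_i=\bot$, $c_i(x')<k$ and $f_i(S_i)+w_i\geq t-2\Delta$; it is a special-almost-top if $a_i=\bot$, $c_i(x')<k$ and $t-f_i(x')-\Delta\leq f_i(S_i)+w_i<t-\Delta$. Event $E_1$: $\sum_{i\text{ almost-top}}f_i(x')\leq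 15(k+1)+5\log\frac1\delta$. Event $E_2$: the number of special-almost-tops is at most $30(k+1)+10\log\frac1\delta$. $E_3=E_1\wedge E_2$; it is determined by $\vec a$ and $W$. *)

theory Defs
  imports "HOL-Probability.Probability"
begin

text \<open>An adversary is deterministic: it maps the list of previous answers
  (True = top, False = bot) to the next query f :: 'a => real.
  Rounds are indexed from 0 (round j here is round j+1 of the paper).\<close>

type_synonym 'a adversary = "bool list \<Rightarrow> 'a \<Rightarrow> real"

definition qval :: "('a \<Rightarrow> real) \<Rightarrow> 'a multiset \<Rightarrow> real" where
  "qval f D = (\<Sum>x\<in>#D. f x)"

definition laplace :: "real \<Rightarrow> real measure" where
  "laplace b = density lborel (\<lambda>x. ennreal (exp (- \<bar>x\<bar> / b) / (2 * b)))"

definition Delta :: "real \<Rightarrow> real \<Rightarrow> real" where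
  "Delta eps delta = (1 / eps) * ln (1 / delta) * ln ((1 / eps) * ln (1 / delta))"

definition tm_step :: "'a adversary \<Rightarrow> real \<Rightarrow> real \<Rightarrow> real \<Rightarrow> real \<Rightarrow> real \<Rightarrow> real \<Rightarrow>
    'a multiset \<times> ('a \<Rightarrow> real) \<times> bool list \<Rightarrow> 'a multiset \<times> ('a \<Rightarrow> real) \<times> bool list" where
  "tm_step A eps delta t k w v st =
     (case st of (D, c, as) \<Rightarrow>
       (let f = A as;
            fh = qval f D + w + min v (Delta eps delta)
        in if fh < t then (D, c, as @ [False])
           else (let c' = (\<lambda>x. c x + f x)
                 in (filter_mset (\<lambda>x. \<not> (c' x \<ge> k)) D, c', as @ [True]))))"

primrec tm_run :: "'a adversary \<Rightarrow> real \<Rightarrow> real \<Rightarrow> real \<Rightarrow> real \<Rightarrow> 'a multiset \<Rightarrow>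
    (nat \<Rightarrow> real) \<Rightarrow> (nat \<Rightarrow> real) \<Rightarrow> nat \<Rightarrow> 'a multiset \<times> ('a \<Rightarrow> real) \<times> bool list" where
  "tm_run A eps delta t k S W V 0 = (S, (\<lambda>_. 0), [])"
| "tm_run A eps delta t k S W V (Suc n) =
     tm_step A eps delta t k (W n) (V n) (tm_run A eps delta t k S W V n)"

definition tm_answers :: "'a adversary \<Rightarrow> real \<Rightarrow> real \<Rightarrow> real \<Rightarrow> real \<Rightarrow> 'a multiset \<Rightarrow>
    (nat \<Rightarrow> real) \<Rightarrow> (nat \<Rightarrow> real) \<Rightarrow> nat \<Rightarrow> bool list" where
  "tm_answers A eps delta t k S W V n = snd (snd (tm_run A eps delta t k S W V n))"

text \<open>Pr[B(T) = as | W]: probability over independent v_0,...,v_{n-1} ~ Lap((1/eps) log(1/delta)),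
  n = length as, with the w_i fixed to W, that the answers of the first n rounds equal as.\<close>
definition prob_ans :: "'a adversary \<Rightarrow> real \<Rightarrow> real \<Rightarrow> real \<Rightarrow> real \<Rightarrow> 'a multiset \<Rightarrow>
    (nat \<Rightarrow> real) \<Rightarrow> bool list \<Rightarrow> real" where
  "prob_ans A eps delta t k T W as =
     (let M = PiM {..<length as} (\<lambda>_. laplace ((1 / eps) * ln (1 / delta)))
      in measure M {V \<in> space M. tm_answers A eps delta t k T W V (length as) = as})"

definition cnt :: "'a adversary \<Rightarrow> bool list \<Rightarrow> nat \<Rightarrow> 'a \<Rightarrow> real" where
  "cnt A as i x = (\<Sum>j<i. if as ! j then A (take j as) x else 0)"

primrec db :: "'a adversary \<Rightarrow> real \<Rightarrow> 'a multiset \<Rightarrow> bool list \<Rightarrow> nat \<Rightarrow> 'a multiset" where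
  "db A k S as 0 = S"
| "db A k S as (Suc i) =
     (if as ! i then filter_mset (\<lambda>x. \<not> (cnt A as (Suc i) x \<ge> k)) (db A k S as i)
      else db A k S as i)"

definition almost_top :: "'a adversary \<Rightarrow> real \<Rightarrow> real \<Rightarrow> real \<Rightarrow> real \<Rightarrow> 'a multiset \<Rightarrow> 'a \<Rightarrow>
    bool list \<Rightarrow> (nat \<Rightarrow> real) \<Rightarrow> nat \<Rightarrow> bool" where
  "almost_top A eps delta t k S x' as W i \<longleftrightarrow>
     i < length as \<and> \<not> as ! i \<and> cnt A as (Suc i) x' < k \<and>
     qval (A (take i as)) (db A k S as i) + W i \<ge> t - 2 * Delta eps delta"

definition special_almost_top :: "'a adversary \<Rightarrow> real \<Rightarrow> real \<Rightarrow> real \<Rightarrow> real \<Rightarrow> 'a multiset \<Rightarrow> 'a \<Rightarrow>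
    bool list \<Rightarrow> (nat \<Rightarrow> real) \<Rightarrow> nat \<Rightarrow> bool" where
  "special_almost_top A eps delta t k S x' as W i \<longleftrightarrow>
     i < length as \<and> \<not> as ! i \<and> cnt A as (Suc i) x' < k \<and>
     t - A (take i as) x' - Delta eps delta \<le> qval (A (take i as)) (db A k S as i) + W i \<and>
     qval (A (take i as)) (db A k S as i) + W i < t - Delta eps delta"

definition E1 :: "'a adversary \<Rightarrow> real \<Rightarrow> real \<Rightarrow> real \<Rightarrow> real \<Rightarrow> 'a multiset \<Rightarrow> 'a \<Rightarrow>
    bool list \<Rightarrow> (nat \<Rightarrow> real) \<Rightarrow> bool" where
  "E1 A eps delta t k S x' as W \<longleftrightarrow>
     (\<Sum>i\<in>{i. almost_top A eps delta t k S x' as W i}. A (take i as) x')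
       \<le> 15 * (k + 1) + 5 * ln (1 / delta)"

definition E2 :: "'a adversary \<Rightarrow> real \<Rightarrow> real \<Rightarrow> real \<Rightarrow> real \<Rightarrow> 'a multiset \<Rightarrow> 'a \<Rightarrow>
    bool list \<Rightarrow> (nat \<Rightarrow> real) \<Rightarrow> bool" where
  "E2 A eps delta t k S x' as W \<longleftrightarrow>
     real (card {i. special_almost_top A eps delta t k S x' as W i})
       \<le> 30 * (k + 1) + 10 * ln (1 / delta)"

definition E3 :: "'a adversary \<Rightarrow> real \<Rightarrow> real \<Rightarrow> real \<Rightarrow> real \<Rightarrow> 'a multiset \<Rightarrow> 'a \<Rightarrow>
    bool list \<Rightarrow> (nat \<Rightarrow> real) \<Rightarrow> bool" where
  "E3 A eps delta t k S x' as W \<longleftrightarrow>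
     E1 A eps delta t k S x' as W \<and> E2 A eps delta t k S x' as W"

text \<open>I_top: rounds i (< length as) with answer top and i \<le> i*, where i* is the first round
  after which the counter of x' is \<ge> k (if no such round, all top rounds).\<close>
definition I_top :: "'a adversary \<Rightarrow> real \<Rightarrow> 'a \<Rightarrow> bool list \<Rightarrow> nat set" where
  "I_top A k x' as =
     {i. i < length as \<and> as ! i \<and> (\<forall>j<i. cnt A as (Suc j) x' < k)}"

definition shiftW :: "'a adversary \<Rightarrow> real \<Rightarrow> 'a \<Rightarrow> bool list \<Rightarrow> (nat \<Rightarrow> real) \<Rightarrow> nat \<Rightarrow> real" where
  "shiftW A k x' as W i = (if i \<in> I_top A k x' as then W i - A (take i as) x' else W i)"

end

theory Submission
  imports Defs
begin

definition lapd :: "real \<Rightarrow> real \<Rightarrow> real" where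
  "lapd b x = exp (- \<bar>x\<bar> / b) / (2 * b)"

lemma lapd_meas[measurable]: "lapd b \<in> borel_measurable borel"
  unfolding lapd_def by measurable

lemma lap_upper:
  assumes b: "b > 0" and a: "a \<ge> 0"
  shows "(\<integral>\<^sup>+x. ennreal (lapd b x) * indicator {a..} x \<partial>lborel) = ennreal (exp (- a / b) / 2)"
proof -
  have "(\<integral>\<^sup>+x. ennreal (lapd b x) * indicator {a..} x \<partial>lborel) = ennreal (0 - (- exp (- a / b) / 2))"
  proof (rule nn_integral_FTC_atLeast)
    show "lapd b \<in> borel_measurable borel" by measurable
    fix x :: real assume x: "a \<le> x"
    show "0 \<le> lapd b x" using b by (simp add: lapd_def)
    have "((\<lambda>x. - exp (- x / b) / 2) has_real_derivative (- (exp (- x / b) * (- 1 / b)) / 2)) (at x)"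
      using b by (auto intro!: derivative_eq_intros)
    moreover have "- (exp (- x / b) * (- 1 / b)) / 2 = lapd b x"
      using x a b by (simp add: lapd_def field_simps)
    ultimately show "((\<lambda>x. - exp (- x / b) / 2) has_real_derivative lapd b x) (at x)" by simp
  next
    have "((\<lambda>x. - exp (- x / b) / 2) \<longlongrightarrow> - 0 / 2) at_top"
    proof (intro tendsto_intros filterlim_compose[OF exp_at_bot])
      have "LIM x at_top. inverse b * x :> at_top"
        using b by (intro filterlim_tendsto_pos_mult_at_top[OF tendsto_const] filterlim_ident) auto
      then have "LIM x at_top. - (inverse b * x) :> at_bot"
        by (simp add: filterlim_uminus_at_top)
      then show "LIM x at_top. - x / b :> at_bot" by (simp add: divide_inverse mult.commute)
    qed simp
    then show "((\<lambda>x. - exp (- x / b) / 2) \<longlongrightarrow> 0) at_top" by simp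
  qed
  then show ?thesis by simp
qed

lemma lap_lower:
  assumes b: "b > 0"
  shows "(\<integral>\<^sup>+x. ennreal (lapd b x) * indicator {..<y} x \<partial>lborel)
       = (\<integral>\<^sup>+x. ennreal (lapd b x) * indicator {-y..} x \<partial>lborel)"
proof -
  have e1: "e2ennreal (1::ereal) = 1" using e2ennreal_ereal[of 1] by (simp add: one_ereal_def)
  have "(\<integral>\<^sup>+x. ennreal (lapd b x) * indicator {..<y} x \<partial>lborel)
      = (\<integral>\<^sup>+x. ennreal (lapd b (0 + -1 * x)) * indicator {..<y} (0 + -1 * x) \<partial>lborel)"
    using nn_integral_real_affine[of "\<lambda>x. ennreal (lapd b x) * indicator {..<y} x" "-1" 0] e1 by simp
  also have "\<dots> = (\<integral>\<^sup>+x. ennreal (lapd b x) * indicator {-y<..} x \<partial>lborel)"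
    by (auto intro!: nn_integral_cong simp: lapd_def split: split_indicator)
  also have "\<dots> = (\<integral>\<^sup>+x. ennreal (lapd b x) * indicator {-y..} x \<partial>lborel)"
    by (intro nn_integral_cong_AE) (use AE_lborel_singleton[of "-y"] in \<open>auto elim!: eventually_mono split: split_indicator\<close>)
  finally show ?thesis .
qed

lemma lap_prob: assumes b: "b > 0" shows "prob_space (laplace b)"
proof
  have eq: "laplace b = density lborel (\<lambda>x. ennreal (lapd b x))"
    by (simp add: laplace_def lapd_def)
  have "emeasure (laplace b) (space (laplace b)) = (\<integral>\<^sup>+x. ennreal (lapd b x) \<partial>lborel)"
    unfolding eq by (simp add: emeasure_density)
  also have "\<dots> = (\<integral>\<^sup>+x. ennreal (lapd b x) * indicator {0..} x + ennreal (lapd b x) * indicator {..<0} x \<partial>lborel)"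
    by (intro nn_integral_cong) (auto split: split_indicator)
  also have "\<dots> = (\<integral>\<^sup>+x. ennreal (lapd b x) * indicator {0..} x \<partial>lborel) + (\<integral>\<^sup>+x. ennreal (lapd b x) * indicator {..<0} x \<partial>lborel)"
    by (intro nn_integral_add) auto
  also have "\<dots> = ennreal (1/2) + ennreal (1/2)"
    using lap_upper[OF b, of 0] lap_lower[OF b, of 0] by simp
  also have "\<dots> = ennreal (1/2 + 1/2)" by (rule ennreal_plus[symmetric]) auto
  also have "\<dots> = 1" by simp
  finally show "emeasure (laplace b) (space (laplace b)) = 1" .
qed

definition lapG :: "real \<Rightarrow> real \<Rightarrow> real" where
  "lapG b y = (if y \<le> 0 then exp (y / b) / 2 else 1 - exp (- y / b) / 2)"

lemma sets_laplace[simp, measurable_cong]: "sets (laplace b) = sets borel"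
  by (simp add: laplace_def)

lemma space_laplace[simp]: "space (laplace b) = UNIV"
  by (simp add: laplace_def)

lemma lap_cdf:
  assumes b: "b > 0"
  shows "measure (laplace b) {v. v < y} = lapG b y"
proof -
  interpret prob_space "laplace b" by (rule lap_prob[OF b])
  have eq: "laplace b = density lborel (\<lambda>x. ennreal (lapd b x))"
    by (simp add: laplace_def lapd_def)
  have up: "emeasure (laplace b) {a..} = ennreal (exp (- a / b) / 2)" if "a \<ge> 0" for a
    unfolding eq using lap_upper[OF b that] by (simp add: emeasure_density)
  show ?thesis
  proof (cases "y \<le> 0")
    case True
    have "emeasure (laplace b) {v. v < y} = (\<integral>\<^sup>+x. ennreal (lapd b x) * indicator {..<y} x \<partial>lborel)"
      unfolding eq by (subst emeasure_density) (auto simp: lessThan_def)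
    also have "\<dots> = ennreal (exp (y / b) / 2)"
      using lap_lower[OF b, of y] lap_upper[OF b, of "-y"] True by simp
    finally show ?thesis using True by (simp add: lapG_def emeasure_eq_measure)
  next
    case False
    have "{v. v < y} = space (laplace b) - {y..}" by auto
    then have "measure (laplace b) {v. v < y} = 1 - measure (laplace b) {y..}"
      using prob_compl[of "{y..}"] by simp
    also have "measure (laplace b) {y..} = exp (- y / b) / 2"
      using up[of y] False by (simp add: emeasure_eq_measure)
    finally show ?thesis using False by (simp add: lapG_def)
  qed
qed



lemma lapG_lower: assumes b: "b > 0" shows "1 - exp (- y / b) / 2 \<le> lapG b y"
proof (cases "y \<le> 0")
  case True
  define s where "s = exp (y / b)"
  have s: "s > 0" by (simp add: s_def)
  have e: "exp (- y / b) = 1 / s" by (simp add: s_def exp_minus field_simps)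
  have "0 \<le> (s - 1) * (s - 1)" by simp
  then have "2 * s - 1 \<le> s * s" by (simp add: algebra_simps)
  then have "1 - 1 / (2 * s) \<le> s / 2" using s by (simp add: field_simps)
  then show ?thesis using True by (simp add: lapG_def s_def exp_minus inverse_eq_divide)
qed (simp add: lapG_def)

lemma lapG_ratio:
  assumes b: "b > 0" and f: "f \<ge> 0"
  shows "lapG b y \<le> exp (f / b) * lapG b (y - f)"
proof (cases "y \<le> 0")
  case True
  have "exp (y / b) = exp (f / b) * exp ((y - f) / b)"
    by (simp add: exp_add[symmetric] diff_divide_distrib)
  then show ?thesis using True f by (simp add: lapG_def)
next
  case yp: False
  show ?thesis
  proof (cases "y - f \<le> 0")
    case True
    have "exp (y / b) = exp (f / b) * exp ((y - f) / b)"
      by (simp add: exp_add[symmetric] diff_divide_distrib)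
    moreover have "1 - exp (- y / b) / 2 \<le> exp (y / b) / 2"
    proof -
      define s where "s = exp (y / b)"
      have s: "s > 0" by (simp add: s_def)
      have e: "exp (- y / b) = 1 / s" by (simp add: s_def exp_minus field_simps)
      have "0 \<le> (s - 1) * (s - 1)" by simp
      then have "2 * s - 1 \<le> s * s" by (simp add: algebra_simps)
      then have "1 - 1 / (2 * s) \<le> s / 2" using s by (simp add: field_simps)
      then show ?thesis by (simp add: s_def exp_minus inverse_eq_divide)
    qed
    ultimately show ?thesis using True yp by (simp add: lapG_def)
  next
    case False
    define a where "a = exp (f / b)"
    define z where "z = exp (- y / b)"
    have a1: "a \<ge> 1" using f b by (simp add: a_def)
    have z1: "z \<le> 1" "z > 0" using yp b by (auto simp: z_def)
    have az: "a * z \<le> 1" using False b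
      by (simp add: a_def z_def exp_add[symmetric] divide_simps)
    have e2: "exp (- (y - f) / b) = a * z"
      using b by (simp add: a_def z_def exp_add[symmetric] field_simps)
    have "0 \<le> (a - 1) * (1 - (a * z + z) / 2)"
      using a1 az z1 by (intro mult_nonneg_nonneg) auto
    moreover have "(a - 1) * (1 - (a * z + z) / 2) = a * (1 - a * z / 2) - (1 - z / 2)"
      by (simp add: field_simps)
    ultimately have "1 - z / 2 \<le> a * (1 - a * z / 2)" by linarith
    moreover have g1: "lapG b y = 1 - z / 2" using yp by (simp add: lapG_def z_def)
    moreover have "lapG b (y - f) = 1 - a * z / 2"
    proof -
      have "lapG b (y - f) = 1 - exp (- (y - f) / b) / 2" using False by (simp add: lapG_def)
      also have "\<dots> = 1 - a * z / 2" by (simp only: e2)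
      finally show ?thesis .
    qed
    ultimately have "lapG b y \<le> a * lapG b (y - f)" by simp
    then show ?thesis by (simp add: a_def)
  qed
qed

lemma lapG_special:
  assumes b: "b > 1" and y: "y \<ge> b * ln b - 1"
  shows "1 \<le> exp (2 / b) * lapG b y"
proof -
  have bp: "b > 0" using b by simp
  define z where "z = 1 / b"
  have z: "0 < z" "z < 1" using b by (auto simp: z_def)
  have ey: "exp (- y / b) \<le> exp z / b"
  proof -
    have "(- y) / b \<le> (- (b * ln b - 1)) / b" using y bp by (intro divide_right_mono) auto
    also have "\<dots> = z - ln b" using bp by (simp add: z_def field_simps)
    finally have "exp (- y / b) \<le> exp (z - ln b)" by simp
    also have "\<dots> = exp z / b" using bp by (simp add: exp_diff)
    finally show ?thesis .
  qed
  show ?thesis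
  proof (cases "exp (2 / b) \<ge> 2")
    case A: True
    show ?thesis
    proof (cases "y \<le> 0")
      case True
      have "(b * ln b - 1) / b \<le> y / b" using y bp by (simp add: divide_right_mono)
      moreover have "(b * ln b - 1) / b = ln b - z" using bp by (simp add: z_def field_simps)
      ultimately have "exp (ln b - z) \<le> exp (y / b)" by simp
      then have l: "b * exp (- z) \<le> exp (y / b)" using bp by (simp add: exp_diff exp_minus field_simps)
      have eq: "exp (2 / b) * (b * exp (- z)) = b * exp z"
        by (simp add: z_def flip: exp_add)
      have "b * exp z \<ge> b * (1 + z)" using bp by (simp add: exp_ge_add_one_self)
      moreover have "b * (1 + z) = b + 1" using bp by (simp add: z_def field_simps)
      ultimately have "exp (2 / b) * (b * exp (- z)) \<ge> 2" using eq b by linarith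
      then have "exp (2 / b) * exp (y / b) \<ge> 2"
        using l by (smt (verit) exp_gt_zero mult_left_mono)
      then show ?thesis using True by (simp add: lapG_def)
    next
      case False
      have "exp (- y / b) < 1" using False bp by simp
      then have "lapG b y \<ge> 1 / 2" using False by (simp add: lapG_def)
      then have "2 * (1 / 2) \<le> exp (2 / b) * lapG b y"
        using A by (intro mult_mono) auto
      then show ?thesis by simp
    qed
  next
    case B: False
    have "exp (2 / b) \<ge> 1 + 2 / b" by (rule exp_ge_add_one_self)
    then have "2 / b < 1" using B by linarith
    then have z2: "z < 1 / 2" using bp by (simp add: z_def field_simps)
    have "z \<le> 2 / b" using divide_right_mono[of 1 2 b] bp by (simp add: z_def)
    then have "exp z \<le> exp (2 / b)" by simp
    then have ez: "exp z < 2" using B by linarith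
    have "z * exp z < (1 / 2) * 2" using ez z2 z by (intro mult_strict_mono) auto
    then have zez: "z * exp z < 1" by simp
    have ey': "exp (- y / b) \<le> z * exp z" using ey by (simp add: z_def)
    have lg: "lapG b y \<ge> 1 - z * exp z / 2" using lapG_lower[OF bp, of y] ey' by linarith
    have e2: "exp (2 / b) \<ge> 1 + 2 * z" using exp_ge_add_one_self[of "2/b"] by (simp add: z_def)
    have "(1 + 2 * z) * (1 - z * exp z / 2) - 1 = z * (2 - exp z / 2 - z * exp z)"
      by (simp add: algebra_simps)
    also have "\<dots> \<ge> 0" using z ez zez by (intro mult_nonneg_nonneg) auto
    finally have "1 \<le> (1 + 2 * z) * (1 - z * exp z / 2)" by simp
    also have "\<dots> \<le> exp (2 / b) * lapG b y"
      using e2 lg zez z by (intro mult_mono) auto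
    finally show ?thesis .
  qed
qed


definition ev :: "'a adversary \<Rightarrow> real \<Rightarrow> real \<Rightarrow> real \<Rightarrow> real \<Rightarrow> 'a multiset \<Rightarrow> (nat \<Rightarrow> real)
   \<Rightarrow> bool list \<Rightarrow> nat \<Rightarrow> real set" where
  "ev A eps delta t k T Wv as j = {v. (qval (A (take j as)) (db A k T as j) + Wv j + min v (Delta eps delta) < t) = (\<not> as ! j)}"

lemma ev_sets[measurable]: "ev A eps delta t k T Wv as j \<in> sets borel"
  unfolding ev_def by measurable

lemma run_len: "length (tm_answers A eps delta t k T Wv V m) = m"
proof (induction m)
  case 0 then show ?case by (simp add: tm_answers_def)
next
  case (Suc m)
  obtain D c bs where r: "tm_run A eps delta t k T Wv V m = (D, c, bs)" by (cases "tm_run A eps delta t k T Wv V m") auto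
  from Suc r show ?case by (simp add: tm_answers_def tm_step_def Let_def)
qed

lemma cnt_Suc: "cnt A as (Suc j) x = cnt A as j x + (if as ! j then A (take j as) x else 0)"
  by (simp add: cnt_def)

lemma cnt_0: "cnt A as 0 x = 0"
  by (simp add: cnt_def)

lemma run_char:
  assumes "m \<le> length as"
  shows "(tm_answers A eps delta t k T Wv V m = take m as \<longleftrightarrow> (\<forall>j<m. V j \<in> ev A eps delta t k T Wv as j))
     \<and> ((\<forall>j<m. V j \<in> ev A eps delta t k T Wv as j) \<longrightarrow>
          tm_run A eps delta t k T Wv V m = (db A k T as m, cnt A as m, take m as))"
  using assms
proof (induction m)
  case 0 then show ?case by (simp add: tm_answers_def cnt_def fun_eq_iff)
next
  case (Suc m)
  then have m: "m < length as" by simp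
  note IH = Suc.IH[OF less_imp_le[OF m]]
  obtain D c bs where r: "tm_run A eps delta t k T Wv V m = (D, c, bs)" by (cases "tm_run A eps delta t k T Wv V m") auto
  have lb: "length bs = m" using run_len[of A eps delta t k T Wv V m] r by (simp add: tm_answers_def)
  have tk: "take (Suc m) as = take m as @ [as ! m]" using m by (simp add: take_Suc_conv_app_nth)
  define x where "x = (\<not> (qval (A bs) D + Wv m + min (V m) (Delta eps delta) < t))"
  have ans: "tm_answers A eps delta t k T Wv V (Suc m) = bs @ [x]"
    using r by (simp add: tm_answers_def tm_step_def Let_def x_def)
  have run: "tm_run A eps delta t k T Wv V (Suc m) =
     (if x then filter_mset (\<lambda>y. \<not> (c y + A bs y \<ge> k)) D else D, if x then (\<lambda>y. c y + A bs y) else c, bs @ [x])"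
    using r by (simp add: tm_step_def Let_def x_def)
  have allS: "(\<forall>j<Suc m. V j \<in> ev A eps delta t k T Wv as j) \<longleftrightarrow>
      (\<forall>j<m. V j \<in> ev A eps delta t k T Wv as j) \<and> V m \<in> ev A eps delta t k T Wv as m"
    using less_Suc_eq by auto
  show ?case
  proof (cases "\<forall>j<m. V j \<in> ev A eps delta t k T Wv as j")
    case True
    then have st: "(D, c, bs) = (db A k T as m, cnt A as m, take m as)" using IH r by simp
    have xe: "x = as ! m \<longleftrightarrow> V m \<in> ev A eps delta t k T Wv as m"
      using st by (auto simp: ev_def x_def)
    have "tm_answers A eps delta t k T Wv V (Suc m) = take (Suc m) as \<longleftrightarrow> x = as ! m"
      using ans tk st by simp
    moreover have "V m \<in> ev A eps delta t k T Wv as m \<longrightarrow>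
        tm_run A eps delta t k T Wv V (Suc m) = (db A k T as (Suc m), cnt A as (Suc m), take (Suc m) as)"
    proof
      assume "V m \<in> ev A eps delta t k T Wv as m"
      then have xm: "x = as ! m" using xe by simp
      show "tm_run A eps delta t k T Wv V (Suc m) = (db A k T as (Suc m), cnt A as (Suc m), take (Suc m) as)"
        using run st xm tk by (auto simp: fun_eq_iff cnt_Suc)
    qed
    ultimately show ?thesis using allS True xe by blast
  next
    case False
    then have "tm_answers A eps delta t k T Wv V m \<noteq> take m as" using IH by simp
    then have "bs \<noteq> take m as" using r by (simp add: tm_answers_def)
    then have "tm_answers A eps delta t k T Wv V (Suc m) \<noteq> take (Suc m) as"
      using ans tk lb by simp
    then show ?thesis using False allS by blast
  qed
qed

lemma prob_factor:
  assumes b: "(1 / eps) * ln (1 / delta) > 0"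
  shows "prob_ans A eps delta t k T Wv as =
     (\<Prod>j<length as. measure (laplace ((1 / eps) * ln (1 / delta))) (ev A eps delta t k T Wv as j))"
proof -
  define b where "b = (1 / eps) * ln (1 / delta)"
  define n where "n = length as"
  define M where "M = PiM {..<n} (\<lambda>_. laplace b)"
  interpret L: prob_space "laplace b" using lap_prob b by (simp add: b_def)
  interpret P: product_prob_space "\<lambda>_. laplace b" "{..<n}"
    by (rule product_prob_spaceI) (rule L.prob_space_axioms)
  have seteq: "{V \<in> space M. tm_answers A eps delta t k T Wv V n = as}
      = {V \<in> space M. \<forall>j\<in>{..<n}. V j \<in> ev A eps delta t k T Wv as j}"
    using run_char[of n as A eps delta t k T Wv] by (auto simp: n_def)
  have "emeasure M {V \<in> space M. \<forall>j\<in>{..<n}. V j \<in> ev A eps delta t k T Wv as j}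
     = (\<Prod>j<n. emeasure (laplace b) (ev A eps delta t k T Wv as j))"
    unfolding M_def by (rule P.emeasure_PiM_Collect) auto
  also have "\<dots> = (\<Prod>j<n. ennreal (measure (laplace b) (ev A eps delta t k T Wv as j)))"
    by (simp add: L.emeasure_eq_measure)
  also have "\<dots> = ennreal (\<Prod>j<n. measure (laplace b) (ev A eps delta t k T Wv as j))"
    by (simp add: prod_ennreal)
  finally have "measure M {V \<in> space M. \<forall>j\<in>{..<n}. V j \<in> ev A eps delta t k T Wv as j}
      = (\<Prod>j<n. measure (laplace b) (ev A eps delta t k T Wv as j))"
    by (simp add: measure_def prod_nonneg)
  then show ?thesis
    unfolding prob_ans_def Let_def using seteq by (simp add: M_def b_def n_def)
qed


lemma qval_add1: "qval f (D + {#x#}) = qval f D + f x"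
  by (simp add: qval_def)

lemma db_add:
  assumes k: "k > 0"
  shows "db A k (S + {#x'#}) as j = db A k S as j + (if (\<forall>i<j. cnt A as (Suc i) x' < k) then {#x'#} else {#})"
proof (induction j)
  case 0 then show ?case by simp
next
  case (Suc j)
  let ?al = "\<lambda>j. \<forall>i<j. cnt A as (Suc i) x' < k"
  have cj: "?al j \<Longrightarrow> cnt A as j x' < k"
    using k by (cases j) (auto simp: cnt_0)
  have alS: "?al (Suc j) \<longleftrightarrow> ?al j \<and> cnt A as (Suc j) x' < k"
    using less_Suc_eq by auto
  show ?case
  proof (cases "as ! j")
    case True
    then show ?thesis using Suc alS by (auto simp: not_le)
  next
    case False
    then have "cnt A as (Suc j) x' = cnt A as j x'" by (simp add: cnt_Suc)
    then have "?al (Suc j) \<longleftrightarrow> ?al j" using alS cj by auto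
    then show ?thesis using Suc False by simp
  qed
qed

theorem lemma3p7:
  fixes A :: "'a adversary" and eps delta t k :: real
    and S :: "'a multiset" and x' :: 'a and as :: "bool list" and W :: "nat \<Rightarrow> real"
  assumes queries: "\<And>bs x. 0 \<le> A bs x \<and> A bs x \<le> 1"
    and eps: "eps > 0" and delta: "0 < delta" "delta < 1"
    and Delta_pos: "(1 / eps) * ln (1 / delta) > 1"
    and k: "k > 0"
    and E3: "E3 A eps delta t k S x' as W"
  shows "prob_ans A eps delta t k (S + {#x'#}) (shiftW A k x' as W) as
           \<le> prob_ans A eps delta t k S W as \<and>
         prob_ans A eps delta t k S W as
           \<le> exp (75 * (k + 1) * eps / ln (1 / delta) + 25 * eps)
             * prob_ans A eps delta t k (S + {#x'#}) W as"
proof -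
  define b where "b = (1 / eps) * ln (1 / delta)"
  define L where "L = ln (1 / delta)"
  define n where "n = length as"
  define D where "D = Delta eps delta"
  define S' where "S' = S + {#x'#}"
  define W' where "W' = shiftW A k x' as W"
  define al where "al = (\<lambda>j. \<forall>i<j. cnt A as (Suc i) x' < k)"
  have b1: "b > 1" using Delta_pos by (simp add: b_def)
  have bp: "b > 0" using b1 by simp
  have Lp: "L > 0" using delta by (simp add: L_def)
  have DD: "D = b * ln b" by (simp add: D_def Delta_def b_def)
  have Dp: "D > 0" using b1 DD by simp
  interpret Lp: prob_space "laplace b" using lap_prob bp by simp
  define p where "p = (\<lambda>T Wv j. measure (laplace b) (ev A eps delta t k T Wv as j))"
  have pf: "prob_ans A eps delta t k T Wv as = (\<Prod>j<n. p T Wv j)" for T Wv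
    using prob_factor[of eps delta A t k T Wv as] bp by (simp add: p_def b_def n_def)
  have evS': "ev A eps delta t k S' Wv as j = {v. (qval (A (take j as)) (db A k S as j) + (if al j then A (take j as) x' else 0)
       + Wv j + min v D < t) = (\<not> as ! j)}" for Wv j
  proof -
    have dbS': "db A k S' as j = db A k S as j + (if al j then {#x'#} else {#})"
      unfolding S'_def al_def by (rule db_add[OF k])
    show ?thesis by (cases "al j") (simp_all add: ev_def dbS' D_def qval_def add_ac)
  qed
  have evS: "ev A eps delta t k S Wv as j = {v. (qval (A (take j as)) (db A k S as j)
       + Wv j + min v D < t) = (\<not> as ! j)}" for Wv j
    by (simp add: ev_def D_def)
  have Itop: "j \<in> I_top A k x' as \<longleftrightarrow> j < n \<and> as ! j \<and> al j" for j
    by (simp add: I_top_def n_def al_def)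
  have q01: "0 \<le> A bs x" "A bs x \<le> 1" for bs x using queries by auto
  have part1: "p S' W' j \<le> p S W j" if j: "j < n" for j
  proof -
    have "ev A eps delta t k S' W' as j \<subseteq> ev A eps delta t k S W as j"
    proof (cases "al j")
      case True
      show ?thesis
      proof (cases "as ! j")
        case True
        then have "W' j = W j - A (take j as) x'" using Itop[of j] j \<open>al j\<close>
          by (simp add: W'_def shiftW_def)
        then show ?thesis unfolding evS' evS using \<open>al j\<close> by auto
      next
        case False
        then have "W' j = W j" using Itop[of j] by (simp add: W'_def shiftW_def)
        then show ?thesis unfolding evS' evS using \<open>al j\<close> False q01[of "take j as" x'] by auto
      qed
    next
      case False
      then have "W' j = W j" using Itop[of j] by (simp add: W'_def shiftW_def)
      then show ?thesis unfolding evS' evS using False by auto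
    qed
    then show ?thesis unfolding p_def by (intro Lp.finite_measure_mono) auto
  qed
  define AT where "AT = almost_top A eps delta t k S x' as W"
  define SP where "SP = special_almost_top A eps delta t k S x' as W"
  define a where "a = (\<lambda>j. (if AT j then A (take j as) x' / b else 0) + (if SP j then 2 / b else 0))"
  have a0: "a j \<ge> 0" for j using bp q01 by (simp add: a_def)
  have p0: "p T Wv j \<ge> 0" for T Wv j by (simp add: p_def)
  have p1: "p T Wv j \<le> 1" for T Wv j by (simp add: p_def)
  have cdf: "measure (laplace b) {v. v < y} = lapG b y" for y by (rule lap_cdf[OF bp])
  have part2: "p S W j \<le> exp (a j) * p S' W j" if j: "j < n" for j
  proof -
    define c where "c = qval (A (take j as)) (db A k S as j) + W j"
    define fx where "fx = A (take j as) x'"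
    have fx: "0 \<le> fx" "fx \<le> 1" using q01 by (auto simp: fx_def)
    have ea: "exp (a j) \<ge> 1" using a0[of j] by simp
    have gen: "p S W j \<le> exp (a j) * p S' W j"
      if sub: "ev A eps delta t k S W as j \<subseteq> ev A eps delta t k S' W as j"
    proof -
      have "p S W j \<le> p S' W j" unfolding p_def using sub by (intro Lp.finite_measure_mono) auto
      also have "\<dots> \<le> exp (a j) * p S' W j" using ea p0[of S' W j] by (simp add: mult_le_cancel_right1)
      finally show ?thesis .
    qed
    show ?thesis
    proof (cases "as ! j")
      case True
      show ?thesis by (rule gen) (unfold evS' evS, use True q01[of "take j as" x'] in auto)
    next
      case bot: False
      show ?thesis
      proof (cases "al j")
        case False
        show ?thesis by (rule gen) (unfold evS' evS, use False in auto)
      next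
        case True
        have cj: "cnt A as j x' < k"
          using True k unfolding al_def by (cases j) (auto simp: cnt_0)
        then have cntlt: "cnt A as (Suc j) x' < k" using bot by (simp add: cnt_Suc)
        have eS: "ev A eps delta t k S W as j = {v. c + min v D < t}"
          unfolding evS using bot by (simp add: c_def)
        have eS': "ev A eps delta t k S' W as j = {v. c + fx + min v D < t}"
          unfolding evS' using bot True by (auto simp: c_def fx_def add_ac)
        show ?thesis
        proof (cases "c \<ge> t - D")
          case True
          have at: "AT j" unfolding AT_def almost_top_def using j bot cntlt True Dp
            by (auto simp: n_def c_def D_def)
          have "p S W j \<le> lapG b (t - c)"
            unfolding p_def cdf[symmetric] eS using True by (intro Lp.finite_measure_mono) auto
          also have "\<dots> \<le> exp (fx / b) * lapG b (t - c - fx)" using lapG_ratio[OF bp fx(1)] by simp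
          also have "lapG b (t - c - fx) \<le> p S' W j"
            unfolding p_def cdf[symmetric] eS' by (intro Lp.finite_measure_mono) auto
          then have "exp (fx / b) * lapG b (t - c - fx) \<le> exp (fx / b) * p S' W j" by simp
          also have "exp (fx / b) \<le> exp (a j)" using at bp by (simp add: a_def fx_def)
          then have "exp (fx / b) * p S' W j \<le> exp (a j) * p S' W j" using p0[of S' W j] by (rule mult_right_mono)
          finally show ?thesis .
        next
          case nt: False
          show ?thesis
          proof (cases "c \<ge> t - fx - D")
            case True
            have sp: "SP j" unfolding SP_def special_almost_top_def using j bot cntlt True nt
              by (auto simp: n_def c_def D_def fx_def)
            have "p S W j \<le> 1" by (rule p1)
            also have "1 \<le> exp (2 / b) * lapG b (t - c - fx)"
              using lapG_special[OF b1] nt fx DD by auto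
            also have "lapG b (t - c - fx) \<le> p S' W j"
              unfolding p_def cdf[symmetric] eS' by (intro Lp.finite_measure_mono) auto
            then have "exp (2 / b) * lapG b (t - c - fx) \<le> exp (2 / b) * p S' W j" by simp
            also have "exp (2 / b) \<le> exp (a j)" using sp bp q01 by (simp add: a_def)
            then have "exp (2 / b) * p S' W j \<le> exp (a j) * p S' W j" using p0[of S' W j] by (rule mult_right_mono)
            finally show ?thesis .
          next
            case False
            have "ev A eps delta t k S' W as j = UNIV" unfolding eS' using False
              by (auto simp: not_le)
            then have "p S' W j = 1" using Lp.prob_space by (simp add: p_def)
            then have "exp (a j) * p S' W j = exp (a j)" by simp
            then show ?thesis using p1[of S W j] ea by linarith
          qed
        qed
      qed
    qed
  qed
  have P1: "(\<Prod>j<n. p S' W' j) \<le> (\<Prod>j<n. p S W j)"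
    by (intro prod_mono) (auto simp: p0 part1)
  have "(\<Prod>j<n. p S W j) \<le> (\<Prod>j<n. exp (a j) * p S' W j)"
    by (intro prod_mono) (auto simp: p0 part2)
  also have "\<dots> = exp (\<Sum>j<n. a j) * (\<Prod>j<n. p S' W j)"
    by (simp add: prod.distrib exp_sum)
  also have "exp (\<Sum>j<n. a j) \<le> exp (75 * (k + 1) * eps / ln (1 / delta) + 25 * eps)"
  proof -
    have ATs: "{j. AT j} = {j \<in> {..<n}. AT j}" by (auto simp: AT_def almost_top_def n_def)
    have SPs: "{j. SP j} = {j \<in> {..<n}. SP j}" by (auto simp: SP_def special_almost_top_def n_def)
    have s1: "(\<Sum>j<n. if AT j then A (take j as) x' / b else 0) = (\<Sum>j\<in>{j. AT j}. A (take j as) x') / b"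
    proof -
      have "(\<Sum>j<n. if AT j then A (take j as) x' / b else 0) = (\<Sum>j\<in>{j \<in> {..<n}. AT j}. A (take j as) x' / b)"
        by (rule sum.inter_filter[symmetric]) simp
      also have "\<dots> = (\<Sum>j\<in>{j. AT j}. A (take j as) x') / b"
        unfolding ATs[symmetric] by (simp add: sum_divide_distrib)
      finally show ?thesis .
    qed
    have s2: "(\<Sum>j<n. if SP j then 2 / b else 0) = (2 / b) * real (card {j. SP j})"
    proof -
      have "(\<Sum>j<n. if SP j then 2 / b else 0) = (\<Sum>j\<in>{j \<in> {..<n}. SP j}. 2 / b)"
        by (rule sum.inter_filter[symmetric]) simp
      also have "\<dots> = (2 / b) * real (card {j. SP j})"
        unfolding SPs[symmetric] by simp
      finally show ?thesis .
    qed
    have e1: "(\<Sum>j\<in>{j. AT j}. A (take j as) x') \<le> 15 * (k + 1) + 5 * L"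
      using E3 by (simp add: E3_def E1_def AT_def L_def)
    have e2: "real (card {j. SP j}) \<le> 30 * (k + 1) + 10 * L"
      using E3 by (simp add: E3_def E2_def SP_def L_def)
    have "(\<Sum>j<n. a j) = (\<Sum>j\<in>{j. AT j}. A (take j as) x') / b + (2 / b) * real (card {j. SP j})"
      unfolding a_def sum.distrib s1 s2 ..
    also have "\<dots> \<le> (15 * (k + 1) + 5 * L) / b + (2 / b) * (30 * (k + 1) + 10 * L)"
      using e1 e2 bp by (intro add_mono divide_right_mono mult_left_mono) auto
    also have "\<dots> = 75 * (k + 1) * eps / ln (1 / delta) + 25 * eps"
      using bp Lp eps by (simp add: b_def L_def field_simps)
    finally show ?thesis by simp
  qed
  then have "exp (\<Sum>j<n. a j) * (\<Prod>j<n. p S' W j) \<le> exp (75 * (k + 1) * eps / ln (1 / delta) + 25 * eps) * (\<Prod>j<n. p S' W j)"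
    by (intro mult_right_mono) (auto simp: p0 prod_nonneg)
  finally have P2: "(\<Prod>j<n. p S W j) \<le> exp (75 * (k + 1) * eps / ln (1 / delta) + 25 * eps) * (\<Prod>j<n. p S' W j)" .
  show ?thesis using P1 P2 by (simp add: pf S'_def W'_def)
qed

end
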